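(* For every two-player stage game $G$: if $G\in\mathcal{G}_{LS}^{m,p}$ then $G\in\mathcal{G}_{LS}^{m,m}$; that is, $\mathcal{G}_{LS}^{m,p}\subseteq\mathcal{G}_{LS}^{m,m}$.
   Context: A two-player stage game $G$ has finite nonempty action sets $A_1,A_2$ and payoffs $u_1,u_2:A_1\times A_2\to\mathbb{R}$, extended to mixed strategies by expectation. $G(T)$ is the $T$-round repetition with realized actions observed each round and payoffs the expected sum of stage payoffs; an SPE of $G(T)$ is a strategy profile whose continuation after every history of length $k<T$ is a Nash equilibrium of $G(T-k)$. Regimes: pure-pure ($p,p$): both players restricted to actions (in the stage game and in every round, including deviations); mixed-pure ($m,p$): player 1 may mix, player 2 uses only actions; mixed-mixed ($m,m$): both may mix. For regime $r$, $\mathrm{Nash}^r(G)$ is the set of stage-game profiles available in $r$ from which no player can profitably deviate unilaterally to a strategy available in $r$. Locally suboptimal behavior occurs in an SPE $\mu$ of $G(T)$ (regime $r$) if for some history $h$ of length $k<T$, $(\mu_1(h),\mu_2(h))\notin\mathrm{Nash}^r(G)$. $\mathcal{G}_{LS}^r$ is the set of stage games $G$ for which there exist $T\ge1$ and an SPE of $G(T)$ in regime $r$ in which locally suboptimal behavior occurs. *)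

theory Defs
  imports Main "HOL-Library.Indicator_Function" Complex_Main
begin

text \<open>Stage game: action sets A1, A2 (finite, nonempty; assumed in the theorem)
  and payoffs u1, u2 : A1 x A2 -> real.\<close>

definition mixed_strategy :: "'a set \<Rightarrow> ('a \<Rightarrow> real) \<Rightarrow> bool" where
  "mixed_strategy A \<sigma> \<longleftrightarrow> (\<forall>x. 0 \<le> \<sigma> x) \<and> (\<forall>x. x \<notin> A \<longrightarrow> \<sigma> x = 0) \<and> sum \<sigma> A = 1"

definition pure_strategy :: "'a set \<Rightarrow> ('a \<Rightarrow> real) \<Rightarrow> bool" where
  "pure_strategy A \<sigma> \<longleftrightarrow> (\<exists>a\<in>A. \<sigma> = (\<lambda>x. if x = a then 1 else 0))"

definition available :: "bool \<Rightarrow> 'a set \<Rightarrow> ('a \<Rightarrow> real) \<Rightarrow> bool" where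
  "available m A \<sigma> \<longleftrightarrow> (if m then mixed_strategy A \<sigma> else pure_strategy A \<sigma>)"

text \<open>A regime is a pair (player 1 may mix, player 2 may mix).\<close>
type_synonym regime = "bool \<times> bool"

definition regime_pp :: regime where "regime_pp = (False, False)"
definition regime_mp :: regime where "regime_mp = (True, False)"
definition regime_mm :: regime where "regime_mm = (True, True)"

definition EU :: "'a set \<Rightarrow> 'b set \<Rightarrow> ('a \<Rightarrow> 'b \<Rightarrow> real) \<Rightarrow> ('a \<Rightarrow> real) \<Rightarrow> ('b \<Rightarrow> real) \<Rightarrow> real" where
  "EU A1 A2 u \<sigma>1 \<sigma>2 = (\<Sum>a\<in>A1. \<Sum>b\<in>A2. \<sigma>1 a * \<sigma>2 b * u a b)"

definition stage_nash :: "regime \<Rightarrow> 'a set \<Rightarrow> 'b set \<Rightarrow> ('a \<Rightarrow> 'b \<Rightarrow> real) \<Rightarrow> ('a \<Rightarrow> 'b \<Rightarrow> real)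
    \<Rightarrow> ('a \<Rightarrow> real) \<Rightarrow> ('b \<Rightarrow> real) \<Rightarrow> bool" where
  "stage_nash r A1 A2 u1 u2 \<sigma>1 \<sigma>2 \<longleftrightarrow>
     available (fst r) A1 \<sigma>1 \<and> available (snd r) A2 \<sigma>2 \<and>
     (\<forall>\<tau>1. available (fst r) A1 \<tau>1 \<longrightarrow> EU A1 A2 u1 \<tau>1 \<sigma>2 \<le> EU A1 A2 u1 \<sigma>1 \<sigma>2) \<and>
     (\<forall>\<tau>2. available (snd r) A2 \<tau>2 \<longrightarrow> EU A1 A2 u2 \<sigma>1 \<tau>2 \<le> EU A1 A2 u2 \<sigma>1 \<sigma>2)"

definition rstrategy :: "bool \<Rightarrow> 'a set \<Rightarrow> (('a \<times> 'b) list \<Rightarrow> 'a \<Rightarrow> real) \<Rightarrow> bool" where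
  "rstrategy m A s \<longleftrightarrow> (\<forall>h. available m A (s h))"

definition rstrategy2 :: "bool \<Rightarrow> 'b set \<Rightarrow> (('a \<times> 'b) list \<Rightarrow> 'b \<Rightarrow> real) \<Rightarrow> bool" where
  "rstrategy2 m A s \<longleftrightarrow> (\<forall>h. available m A (s h))"

fun cont_value :: "'a set \<Rightarrow> 'b set \<Rightarrow> ('a \<Rightarrow> 'b \<Rightarrow> real) \<Rightarrow> (('a \<times> 'b) list \<Rightarrow> 'a \<Rightarrow> real)
    \<Rightarrow> (('a \<times> 'b) list \<Rightarrow> 'b \<Rightarrow> real) \<Rightarrow> ('a \<times> 'b) list \<Rightarrow> nat \<Rightarrow> real" where
  "cont_value A1 A2 u s1 s2 h 0 = 0"
| "cont_value A1 A2 u s1 s2 h (Suc n) =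
     (\<Sum>a\<in>A1. \<Sum>b\<in>A2. s1 h a * s2 h b * (u a b + cont_value A1 A2 u s1 s2 (h @ [(a, b)]) n))"

text \<open>SPE of G(T) in regime r: after every (valid) history of length k < T,
  the continuation is a Nash equilibrium of G(T-k).\<close>
definition is_SPE :: "regime \<Rightarrow> 'a set \<Rightarrow> 'b set \<Rightarrow> ('a \<Rightarrow> 'b \<Rightarrow> real) \<Rightarrow> ('a \<Rightarrow> 'b \<Rightarrow> real) \<Rightarrow> nat
    \<Rightarrow> (('a \<times> 'b) list \<Rightarrow> 'a \<Rightarrow> real) \<Rightarrow> (('a \<times> 'b) list \<Rightarrow> 'b \<Rightarrow> real) \<Rightarrow> bool" where
  "is_SPE r A1 A2 u1 u2 T s1 s2 \<longleftrightarrow>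
     rstrategy (fst r) A1 s1 \<and> rstrategy2 (snd r) A2 s2 \<and>
     (\<forall>h. set h \<subseteq> A1 \<times> A2 \<and> length h < T \<longrightarrow>
        (\<forall>t1. rstrategy (fst r) A1 t1 \<longrightarrow>
           cont_value A1 A2 u1 t1 s2 h (T - length h) \<le> cont_value A1 A2 u1 s1 s2 h (T - length h)) \<and>
        (\<forall>t2. rstrategy2 (snd r) A2 t2 \<longrightarrow>
           cont_value A1 A2 u2 s1 t2 h (T - length h) \<le> cont_value A1 A2 u2 s1 s2 h (T - length h)))"

definition in_G_LS :: "regime \<Rightarrow> 'a set \<Rightarrow> 'b set \<Rightarrow> ('a \<Rightarrow> 'b \<Rightarrow> real) \<Rightarrow> ('a \<Rightarrow> 'b \<Rightarrow> real) \<Rightarrow> bool" where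
  "in_G_LS r A1 A2 u1 u2 \<longleftrightarrow>
     (\<exists>T \<ge> 1. \<exists>s1 s2. is_SPE r A1 A2 u1 u2 T s1 s2 \<and>
        (\<exists>h. set h \<subseteq> A1 \<times> A2 \<and> length h < T \<and> \<not> stage_nash r A1 A2 u1 u2 (s1 h) (s2 h)))"

end

theory Submission
  imports Defs
begin

lemma pure_mixed: "finite A \<Longrightarrow> pure_strategy A \<sigma> \<Longrightarrow> mixed_strategy A \<sigma>"
  unfolding pure_strategy_def mixed_strategy_def by auto

lemma cont_agree:
  "(\<And>g. length h \<le> length g \<Longrightarrow> t g = s g) \<Longrightarrow>
   cont_value A1 A2 u s1 t h n = cont_value A1 A2 u s1 s h n"
proof (induction n arbitrary: h)
  case 0 then show ?case by simp
next
  case (Suc n)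
  have th: "t h = s h" using Suc.prems by simp
  have "\<And>a b. cont_value A1 A2 u s1 t (h@[(a,b)]) n = cont_value A1 A2 u s1 s (h@[(a,b)]) n"
    by (rule Suc.IH) (simp add: Suc.prems)
  then show ?case by (simp add: th)
qed

lemma p2_mixed:
  assumes fin1: "finite A1" and fin2: "finite A2"
    and s1mix: "rstrategy True A1 s1" and s2: "rstrategy2 False A2 s2"
    and spe: "\<And>h t2. set h \<subseteq> A1 \<times> A2 \<Longrightarrow> length h < T \<Longrightarrow> rstrategy2 False A2 t2 \<Longrightarrow>
        cont_value A1 A2 u2 s1 t2 h (T - length h) \<le> cont_value A1 A2 u2 s1 s2 h (T - length h)"
    and t2: "rstrategy2 True A2 t2"
  shows "set h \<subseteq> A1 \<times> A2 \<Longrightarrow> length h + n = T \<Longrightarrow>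
     cont_value A1 A2 u2 s1 t2 h n \<le> cont_value A1 A2 u2 s1 s2 h n"
proof (induction n arbitrary: h)
  case 0 show ?case by simp
next
  case (Suc n)
  let ?C = "\<lambda>a b. cont_value A1 A2 u2 s1 s2 (h@[(a,b)]) n"
  have IH: "\<And>a b. a\<in>A1 \<Longrightarrow> b\<in>A2 \<Longrightarrow> cont_value A1 A2 u2 s1 t2 (h@[(a,b)]) n \<le> ?C a b"
    using Suc by auto
  have nn1: "\<And>a. 0 \<le> s1 h a" using s1mix
    by (simp add: rstrategy_def available_def mixed_strategy_def)
  have nn2: "\<And>b. 0 \<le> t2 h b" using t2
    by (simp add: rstrategy2_def available_def mixed_strategy_def)
  have sum2: "sum (t2 h) A2 = 1" using t2
    by (simp add: rstrategy2_def available_def mixed_strategy_def)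
  define V where "V = cont_value A1 A2 u2 s1 s2 h (Suc n)"
  have dev: "(\<Sum>a\<in>A1. s1 h a * (u2 a b + ?C a b)) \<le> V" if b: "b\<in>A2" for b
  proof -
    define t where "t = s2(h := (\<lambda>x. if x = b then 1 else 0))"
    have "rstrategy2 False A2 t" using s2 b
      by (auto simp: t_def rstrategy2_def available_def pure_strategy_def)
    hence le: "cont_value A1 A2 u2 s1 t h (Suc n) \<le> V"
    proof -
      have "T - length h = Suc n" using Suc.prems by simp
      then show ?thesis using spe[of h t] Suc.prems \<open>rstrategy2 False A2 t\<close>
        unfolding V_def by (metis less_add_Suc1 add_Suc_right)
    qed
    have ag: "\<And>a b'. cont_value A1 A2 u2 s1 t (h@[(a,b')]) n = ?C a b'"
      by (rule cont_agree) (auto simp: t_def)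
    have th: "t h = (\<lambda>x. if x = b then 1 else 0)" by (simp add: t_def)
    have "cont_value A1 A2 u2 s1 t h (Suc n) =
       (\<Sum>a\<in>A1. \<Sum>b'\<in>A2. s1 h a * (if b' = b then 1 else 0) * (u2 a b' + ?C a b'))"
      unfolding cont_value.simps ag th by simp
    also have "\<dots> = (\<Sum>a\<in>A1. s1 h a * (u2 a b + ?C a b))"
      proof (rule sum.cong[OF refl])
        fix a
        have "(\<Sum>b'\<in>A2. s1 h a * (if b' = b then 1 else 0) * (u2 a b' + ?C a b'))
            = (\<Sum>b'\<in>A2. if b' = b then s1 h a * (u2 a b' + ?C a b') else 0)"
          by (rule sum.cong) auto
        also have "\<dots> = s1 h a * (u2 a b + ?C a b)" using b fin2 by (simp add: sum.delta')
        finally show "(\<Sum>b'\<in>A2. s1 h a * (if b' = b then 1 else 0) * (u2 a b' + ?C a b'))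
            = s1 h a * (u2 a b + ?C a b)" .
      qed
    finally show ?thesis using le by simp
  qed
  have "cont_value A1 A2 u2 s1 t2 h (Suc n) =
     (\<Sum>a\<in>A1. \<Sum>b\<in>A2. s1 h a * t2 h b * (u2 a b + cont_value A1 A2 u2 s1 t2 (h@[(a,b)]) n))"
    by simp
  also have "\<dots> \<le> (\<Sum>a\<in>A1. \<Sum>b\<in>A2. s1 h a * t2 h b * (u2 a b + ?C a b))"
    by (intro sum_mono mult_left_mono add_left_mono IH mult_nonneg_nonneg nn1 nn2)
  also have "\<dots> = (\<Sum>b\<in>A2. t2 h b * (\<Sum>a\<in>A1. s1 h a * (u2 a b + ?C a b)))"
    by (subst sum.swap) (simp add: sum_distrib_left mult_ac)
  also have "\<dots> \<le> (\<Sum>b\<in>A2. t2 h b * V)"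
    by (intro sum_mono mult_left_mono dev nn2)
  also have "\<dots> = V" using sum2 by (simp add: sum_distrib_right[symmetric])
  finally show ?case by (simp add: V_def)
qed

theorem mainTheorem13:
  fixes A1 :: "'a set" and A2 :: "'b set" and u1 u2 :: "'a \<Rightarrow> 'b \<Rightarrow> real"
  assumes "finite A1" and "A1 \<noteq> {}" and "finite A2" and "A2 \<noteq> {}"
    and "in_G_LS regime_mp A1 A2 u1 u2"
  shows "in_G_LS regime_mm A1 A2 u1 u2"
proof -
  obtain T s1 s2 h where T: "T \<ge> 1" and spe: "is_SPE regime_mp A1 A2 u1 u2 T s1 s2"
    and h: "set h \<subseteq> A1 \<times> A2" "length h < T"
    and ns: "\<not> stage_nash regime_mp A1 A2 u1 u2 (s1 h) (s2 h)"
    using assms(5) unfolding in_G_LS_def by blast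
  have s1: "rstrategy True A1 s1" and s2: "rstrategy2 False A2 s2"
    using spe by (auto simp: is_SPE_def regime_mp_def)
  have s2m: "rstrategy2 True A2 s2" using s2 pure_mixed[OF assms(3)]
    by (auto simp: rstrategy2_def available_def)
  have spe2: "\<And>h t2. set h \<subseteq> A1 \<times> A2 \<Longrightarrow> length h < T \<Longrightarrow> rstrategy2 False A2 t2 \<Longrightarrow>
        cont_value A1 A2 u2 s1 t2 h (T - length h) \<le> cont_value A1 A2 u2 s1 s2 h (T - length h)"
    using spe by (auto simp: is_SPE_def regime_mp_def)
  have spe1: "\<And>h t1. set h \<subseteq> A1 \<times> A2 \<Longrightarrow> length h < T \<Longrightarrow> rstrategy True A1 t1 \<Longrightarrow>
        cont_value A1 A2 u1 t1 s2 h (T - length h) \<le> cont_value A1 A2 u1 s1 s2 h (T - length h)"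
    using spe by (auto simp: is_SPE_def regime_mp_def)
  have "is_SPE regime_mm A1 A2 u1 u2 T s1 s2"
    unfolding is_SPE_def regime_mm_def fst_conv snd_conv
  proof (intro conjI s1 s2m allI impI)
    fix g and t1 :: "('a \<times> 'b) list \<Rightarrow> 'a \<Rightarrow> real" assume "set g \<subseteq> A1 \<times> A2 \<and> length g < T" "rstrategy True A1 t1"
    then show "cont_value A1 A2 u1 t1 s2 g (T - length g) \<le> cont_value A1 A2 u1 s1 s2 g (T - length g)"
      using spe1 by blast
  next
    fix g and t2 :: "('a \<times> 'b) list \<Rightarrow> 'b \<Rightarrow> real" assume g: "set g \<subseteq> A1 \<times> A2 \<and> length g < T" and t2: "rstrategy2 True A2 t2"
    show "cont_value A1 A2 u2 s1 t2 g (T - length g) \<le> cont_value A1 A2 u2 s1 s2 g (T - length g)"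
      using p2_mixed[OF assms(1,3) s1 s2 spe2 t2, of g "T - length g"] g by simp
  qed
  moreover have "\<not> stage_nash regime_mm A1 A2 u1 u2 (s1 h) (s2 h)"
  proof
    assume sn: "stage_nash regime_mm A1 A2 u1 u2 (s1 h) (s2 h)"
    have "available False A2 (s2 h)" using s2 by (simp add: rstrategy2_def)
    moreover have "\<And>\<tau>. available False A2 \<tau> \<Longrightarrow> available True A2 \<tau>"
      using pure_mixed[OF assms(3)] by (simp add: available_def)
    ultimately have "stage_nash regime_mp A1 A2 u1 u2 (s1 h) (s2 h)"
      using sn by (auto simp: stage_nash_def regime_mp_def regime_mm_def)
    then show False using ns by simp
  qed
  ultimately show ?thesis unfolding in_G_LS_def using T h by blast
qed

end
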